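(* Let $n$ be a positive integer and $N=n^2+1$. Then for every integer $0\le k\le n$, $$(\Delta^k\delta_e,\delta_e)_{\ell^2(H)}=(\Delta_N^k\delta_e,\delta_e)_{\ell^2(H_N)}.$$
   Context: $H$ is the discrete Heisenberg group of $3\times3$ upper unitriangular integer matrices $\begin{pmatrix}1&k&m\\0&1&\ell\\0&0&1\end{pmatrix}$, $k,\ell,m\in\mathbb Z$; for $N\ge2$, $H_N$ is the analogous group with entries in $\mathbb Z/N\mathbb Z$. In both groups $x$ is the matrix with $k=1,\ell=m=0$ and $y$ the matrix with $\ell=1,k=m=0$. $\Delta=\frac14(x+x^{-1}+y+y^{-1})$ is the Laplace operator, an element of the group algebra of $H$ acting on $\ell^2(H)$ via the left regular representation; likewise $\Delta_N=\frac14(x+x^{-1}+y+y^{-1})$ acts on $\ell^2(H_N)$. $\delta_e$ denotes the indicator function of the identity element in the respective group. *)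

theory Defs
  imports "HOL-Analysis.Analysis"
begin

text \<open>Elements of the discrete Heisenberg group H are encoded as triples (k, l, m) of integers,
standing for the upper unitriangular matrix with entries k (position 1,2), l (position 2,3)
and m (position 1,3). Matrix multiplication gives the law below.\<close>

type_synonym heis = "int \<times> int \<times> int"

definition hmul :: "heis \<Rightarrow> heis \<Rightarrow> heis" where
  "hmul g h = (case g of (k, l, m) \<Rightarrow> case h of (k', l', m') \<Rightarrow>
                 (k + k', l + l', m + m' + k * l'))"

definition hinv :: "heis \<Rightarrow> heis" where
  "hinv g = (case g of (k, l, m) \<Rightarrow> (- k, - l, k * l - m))"

definition he :: heis where "he = (0, 0, 0)"
definition hx :: heis where "hx = (1, 0, 0)"
definition hy :: heis where "hy = (0, 1, 0)"

definition lreg :: "heis \<Rightarrow> (heis \<Rightarrow> real) \<Rightarrow> heis \<Rightarrow> real" where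
  "lreg g f = (\<lambda>h. f (hmul (hinv g) h))"

definition Lap :: "(heis \<Rightarrow> real) \<Rightarrow> heis \<Rightarrow> real" where
  "Lap f = (\<lambda>h. (1/4) * (lreg hx f h + lreg (hinv hx) f h + lreg hy f h + lreg (hinv hy) f h))"

definition delta_e :: "heis \<Rightarrow> real" where
  "delta_e = (\<lambda>h. if h = he then 1 else 0)"

definition l2inner :: "(heis \<Rightarrow> real) \<Rightarrow> (heis \<Rightarrow> real) \<Rightarrow> real" where
  "l2inner f g = (\<Sum>\<^sub>\<infinity>h. f h * g h)"

text \<open>The finite Heisenberg group H_N: triples with entries in {0..<N} (representatives of Z/NZ),
with the same law reduced mod N.\<close>

definition hred :: "int \<Rightarrow> heis \<Rightarrow> heis" where
  "hred N g = (case g of (k, l, m) \<Rightarrow> (k mod N, l mod N, m mod N))"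

definition HN :: "int \<Rightarrow> heis set" where
  "HN N = {0..<N} \<times> {0..<N} \<times> {0..<N}"

definition nmul :: "int \<Rightarrow> heis \<Rightarrow> heis \<Rightarrow> heis" where
  "nmul N g h = hred N (hmul g h)"

definition ninv :: "int \<Rightarrow> heis \<Rightarrow> heis" where
  "ninv N g = hred N (hinv g)"

definition lregN :: "int \<Rightarrow> heis \<Rightarrow> (heis \<Rightarrow> real) \<Rightarrow> heis \<Rightarrow> real" where
  "lregN N g f = (\<lambda>h. f (nmul N (ninv N g) h))"

definition LapN :: "int \<Rightarrow> (heis \<Rightarrow> real) \<Rightarrow> heis \<Rightarrow> real" where
  "LapN N f = (\<lambda>h. (1/4) * (lregN N (hred N hx) f h + lregN N (ninv N hx) f h
                            + lregN N (hred N hy) f h + lregN N (ninv N hy) f h))"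

definition delta_eN :: "int \<Rightarrow> heis \<Rightarrow> real" where
  "delta_eN N = (\<lambda>h. if h = hred N he then 1 else 0)"

definition l2innerN :: "int \<Rightarrow> (heis \<Rightarrow> real) \<Rightarrow> (heis \<Rightarrow> real) \<Rightarrow> real" where
  "l2innerN N f g = (\<Sum>h\<in>HN N. f h * g h)"

end

theory Submission
  imports Defs
begin

definition Qc :: "int \<Rightarrow> nat \<Rightarrow> heis \<Rightarrow> bool" where
  "Qc N j h = (case h of (a, b, c) \<Rightarrow>
     \<bar>a\<bar> + int j < N \<and> \<bar>b\<bar> + int j < N \<and> \<bar>c\<bar> + int j * (\<bar>b\<bar> + int j) < N)"

lemma modaux2: "(c mod N + d mod N + x mod N * (y mod N)) mod N = (c + d + x * y) mod (N::int)"
proof -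
  let ?P = "x mod N * (y mod N)"
  have "(c mod N + d mod N + ?P) mod N = ((c mod N + d mod N) mod N + ?P) mod N"
    by (rule mod_add_left_eq[symmetric])
  also have "\<dots> = ((c + d) mod N + ?P) mod N" by (simp only: mod_add_eq)
  also have "\<dots> = (c + d + ?P) mod N" by (rule mod_add_left_eq)
  also have "\<dots> = (c + d + ?P mod N) mod N" by (rule mod_add_right_eq[symmetric])
  also have "\<dots> = (c + d + (x * y) mod N) mod N" by (simp only: mod_mult_eq)
  also have "\<dots> = (c + d + x * y) mod N" by (rule mod_add_right_eq)
  finally show ?thesis .
qed

lemma hred_hmul: "hred N (hmul (hred N a) (hred N b)) = hred N (hmul a b)"
  by (cases a; cases b) (simp add: hred_def hmul_def mod_simps modaux2)

lemma modaux: "(x mod N * (y mod N) - z) mod N = (x * y - z) mod (N::int)"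
proof -
  have "(x mod N * (y mod N) - z) mod N = ((x mod N * (y mod N)) mod N - z) mod N"
    by (simp only: mod_diff_left_eq)
  also have "\<dots> = ((x * y) mod N - z) mod N" by (simp only: mod_mult_eq)
  also have "\<dots> = (x * y - z) mod N" by (simp only: mod_diff_left_eq)
  finally show ?thesis .
qed

lemma hred_hinv: "hred N (hinv (hred N a)) = hred N (hinv a)"
  by (cases a) (simp add: hred_def hinv_def mod_simps modaux)

lemma hred_hred: "hred N (hred N a) = hred N a"
  by (cases a) (simp add: hred_def)

lemma nmul_red: "nmul N (hred N t) (hred N h) = hred N (hmul t h)"
  by (simp add: nmul_def hred_hmul)

lemma ninv_red: "ninv N (hred N t) = hred N (hinv t)"
  by (simp add: ninv_def hred_hinv)

lemma small_mod: "\<bar>a::int\<bar> < N \<Longrightarrow> (a mod N = 0) = (a = 0)"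
proof
  assume h: "\<bar>a\<bar> < N" "a mod N = 0"
  show "a = 0"
  proof (rule ccontr)
    assume "a \<noteq> 0"
    moreover have "N dvd a" using h by (simp add: mod_eq_0_iff_dvd)
    ultimately have "\<bar>N\<bar> \<le> \<bar>a\<bar>" by (rule dvd_imp_le_int)
    then show False using h by linarith
  qed
qed simp

lemma main_ind:
  "Qc N j h \<Longrightarrow> (LapN N ^^ j) (delta_eN N) (hred N h) = (Lap ^^ j) delta_e h"
proof (induction j arbitrary: h)
  case 0
  obtain a b c where h: "h = (a, b, c)" by (cases h)
  have "\<bar>a\<bar> < N" "\<bar>b\<bar> < N" "\<bar>c\<bar> < N" using 0 by (auto simp: Qc_def h)
  then have "(hred N h = (0,0,0)) = (h = (0,0,0))"
    by (simp add: h hred_def small_mod)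
  then show ?case by (simp add: delta_eN_def delta_e_def he_def hred_def)
next
  case (Suc j)
  obtain a b c where h: "h = (a, b, c)" by (cases h)
  let ?G = "(LapN N ^^ j) (delta_eN N)"
  let ?F = "(Lap ^^ j) delta_e"
  have e1: "hred N hx = hred N hx" by simp
  have L: "(LapN N ^^ Suc j) (delta_eN N) (hred N h) =
     (1/4) * (?G (hred N (hmul (hinv hx) h)) + ?G (hred N (hmul (hinv (hinv hx)) h))
            + ?G (hred N (hmul (hinv hy) h)) + ?G (hred N (hmul (hinv (hinv hy)) h)))"
    unfolding funpow.simps comp_def LapN_def lregN_def
    by (simp add: ninv_def hred_hinv nmul_red)
  have R: "(Lap ^^ Suc j) delta_e h =
     (1/4) * (?F (hmul (hinv hx) h) + ?F (hmul (hinv (hinv hx)) h)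
            + ?F (hmul (hinv hy) h) + ?F (hmul (hinv (hinv hy)) h))"
    unfolding funpow.simps comp_def Lap_def lreg_def by simp
  have q: "Qc N (Suc j) h" by fact
  have p1: "hmul (hinv hx) h = (a - 1, b, c - b)" by (simp add: h hmul_def hinv_def hx_def)
  have p2: "hmul (hinv (hinv hx)) h = (a + 1, b, c + b)" by (simp add: h hmul_def hinv_def hx_def)
  have p3: "hmul (hinv hy) h = (a, b - 1, c)" by (simp add: h hmul_def hinv_def hy_def)
  have p4: "hmul (hinv (hinv hy)) h = (a, b + 1, c)" by (simp add: h hmul_def hinv_def hy_def)
  have qa: "\<bar>a\<bar> + (1 + int j) < N" "\<bar>b\<bar> + (1 + int j) < N"
    and qc0: "\<bar>c\<bar> + (1 + int j) * (\<bar>b\<bar> + (1 + int j)) < N"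
    using q unfolding Qc_def h prod.case of_nat_Suc by auto
  have qc: "\<bar>c\<bar> + (int j + 1) * (\<bar>b\<bar> + int j + 1) < N"
    using qc0 by (simp add: ac_simps)
  have ex: "(int j + 1) * (\<bar>b\<bar> + int j + 1) = int j * (\<bar>b\<bar> + int j) + \<bar>b\<bar> + 2 * int j + 1"
    by (simp add: algebra_simps)
  have m1: "int j * (\<bar>b - 1\<bar> + int j) \<le> int j * (\<bar>b\<bar> + int j + 1)"
    by (rule mult_left_mono) auto
  have m2: "int j * (\<bar>b + 1\<bar> + int j) \<le> int j * (\<bar>b\<bar> + int j + 1)"
    by (rule mult_left_mono) auto
  have ex2: "int j * (\<bar>b\<bar> + int j + 1) = int j * (\<bar>b\<bar> + int j) + int j"
    by (simp add: algebra_simps)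
  have j0: "0 \<le> int j" by simp
  have t1: "\<bar>a - 1\<bar> \<le> \<bar>a\<bar> + 1" "\<bar>a + 1\<bar> \<le> \<bar>a\<bar> + 1"
    "\<bar>b - 1\<bar> \<le> \<bar>b\<bar> + 1" "\<bar>b + 1\<bar> \<le> \<bar>b\<bar> + 1"
    "\<bar>c - b\<bar> \<le> \<bar>c\<bar> + \<bar>b\<bar>" "\<bar>c + b\<bar> \<le> \<bar>c\<bar> + \<bar>b\<bar>"
    by arith+
  have q1: "Qc N j (hmul (hinv hx) h)" unfolding p1 Qc_def prod.case
    by (intro conjI) (use j0 qa qc ex t1 in \<open>smt (verit)\<close>)+
  have q2: "Qc N j (hmul (hinv (hinv hx)) h)" unfolding p2 Qc_def prod.case
    by (intro conjI) (use j0 qa qc ex t1 in \<open>smt (verit)\<close>)+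
  have q3: "Qc N j (hmul (hinv hy) h)" unfolding p3 Qc_def prod.case
    by (intro conjI) (use j0 qa qc ex m1 ex2 t1 in \<open>smt (verit)\<close>)+
  have q4: "Qc N j (hmul (hinv (hinv hy)) h)" unfolding p4 Qc_def prod.case
    by (intro conjI) (use j0 qa qc ex m2 ex2 t1 in \<open>smt (verit)\<close>)+
  show ?case unfolding L R Suc.IH[OF q1] Suc.IH[OF q2] Suc.IH[OF q3] Suc.IH[OF q4] ..
qed

lemma infsum_single1: "infsum (f :: heis \<Rightarrow> real) {x} = f x"
  by simp

theorem lemma4p1:
  fixes n k :: nat
  assumes "n \<ge> 1" and "k \<le> n"
  shows "l2inner ((Lap ^^ k) delta_e) delta_e
       = l2innerN (int (n^2 + 1)) ((LapN (int (n^2 + 1)) ^^ k) (delta_eN (int (n^2 + 1))))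
                  (delta_eN (int (n^2 + 1)))"
proof -
  define N where "N = int (n^2 + 1)"
  have N1: "N \<ge> 1" using N_def by simp
  have kk: "k * k \<le> n * n" using assms(2) by (simp add: mult_le_mono)
  have "Qc N k he" unfolding Qc_def he_def N_def prod.case
  proof -
    have "int k * int k \<le> int n * int n" using kk by (metis of_nat_le_iff of_nat_mult)
    moreover have "int k \<le> int n" using assms(2) by simp
    moreover have "0 \<le> int k * int k" by simp
    moreover have "n \<le> n * n" using assms(1) by (metis mult_1_left mult_le_mono1)
    moreover have "int n \<le> int n * int n" using calculation(4) by (metis of_nat_le_iff of_nat_mult)
    ultimately show "\<bar>0::int\<bar> + int k < int (n\<^sup>2 + 1) \<and> \<bar>0::int\<bar> + int k < int (n\<^sup>2 + 1) \<and> \<bar>0::int\<bar> + int k * (\<bar>0::int\<bar> + int k) < int (n\<^sup>2 + 1)"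
      by (simp add: power2_eq_square)
  qed
  then have key: "(LapN N ^^ k) (delta_eN N) (0,0,0) = (Lap ^^ k) delta_e he"
  proof -
    have "hred N he = (0,0,0)" by (simp add: hred_def he_def)
    then show ?thesis using main_ind[OF \<open>Qc N k he\<close>] by (simp only:)
  qed
  have A: "l2inner ((Lap ^^ k) delta_e) delta_e = (Lap ^^ k) delta_e he"
  proof -
    have "l2inner ((Lap ^^ k) delta_e) delta_e = infsum (\<lambda>h. (Lap ^^ k) delta_e h * delta_e h) {he}"
      unfolding l2inner_def by (rule infsum_cong_neutral) (auto simp: delta_e_def)
    also have "\<dots> = (Lap ^^ k) delta_e he * delta_e he" by (rule infsum_single1)
    also have "delta_e he = 1" unfolding delta_e_def by (rule if_P) (rule refl)
    finally show ?thesis by (simp only: mult_1_right)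
  qed
  have B: "l2innerN N ((LapN N ^^ k) (delta_eN N)) (delta_eN N) = (LapN N ^^ k) (delta_eN N) (0,0,0)"
  proof -
    have m: "(0,0,0) \<in> HN N" using N1 by (simp add: HN_def)
    have "l2innerN N ((LapN N ^^ k) (delta_eN N)) (delta_eN N)
        = (\<Sum>h\<in>HN N. if h = (0,0,0) then (LapN N ^^ k) (delta_eN N) (0,0,0) else 0)"
      unfolding l2innerN_def
    proof (rule sum.cong)
      fix x :: heis
      have "hred N he = (0,0,0)" by (simp add: hred_def he_def)
      then show "(LapN N ^^ k) (delta_eN N) x * delta_eN N x =
        (if x = (0,0,0) then (LapN N ^^ k) (delta_eN N) (0,0,0) else 0)"
        unfolding delta_eN_def by simp
    qed simp
    also have "\<dots> = (LapN N ^^ k) (delta_eN N) (0,0,0)"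
    proof -
      have fin: "finite (HN N)" unfolding HN_def by simp
      show ?thesis using sum.delta[OF fin, of "(0,0,0)" "\<lambda>_. (LapN N ^^ k) (delta_eN N) (0,0,0)"] m
        by simp
    qed
    finally show ?thesis .
  qed
  show ?thesis unfolding N_def[symmetric] A B key ..
qed

end
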